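(* Let $(z_j)_{j\ge1}$ be a sequence of distinct points of the open unit disc $U$ with $\sum_{j=1}^\infty(1-|z_j|)=\infty$. Then there exists a sequence of positive numbers $(\eta_j)$ with $\lim_{j\to\infty}\eta_j=0$ such that for every bounded analytic function $f$ on $U$ that is not identically zero, \[ \limsup_{j\to\infty}\frac{|f(z_j)|}{\eta_j}=\infty . \] *)

theory Defs
  imports "HOL-Complex_Analysis.Complex_Analysis" "HOL-Library.Liminf_Limsup"
begin

end

theory Submission
  imports Defs "HOL-Real_Asymp.Real_Asymp"
begin

abbreviation mb :: "complex \<Rightarrow> complex \<Rightarrow> complex" where
  "mb a \<equiv> Moebius_function 0 a"

lemma mb_denom: "norm a < 1 \<Longrightarrow> norm z < 1 \<Longrightarrow> 1 - cnj a * z \<noteq> 0"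
proof
  assume "norm a < 1" "norm z < 1" "1 - cnj a * z = 0"
  then have "norm (cnj a * z) = 1" by (metis eq_iff_diff_eq_0 norm_one)
  moreover have "norm (cnj a * z) < 1" using \<open>norm a < 1\<close> \<open>norm z < 1\<close>
    by (simp add: norm_mult) (metis mult_strict_mono' norm_ge_zero mult_1_right less_le_trans mult_le_one less_imp_le)
  ultimately show False by simp
qed

lemma mb_zero_iff: "norm a < 1 \<Longrightarrow> norm z < 1 \<Longrightarrow> mb a z = 0 \<longleftrightarrow> z = a"
  using mb_denom[of a z] by (simp add: Moebius_function_simple)

lemma mb_lt1: "norm a < 1 \<Longrightarrow> norm z < 1 \<Longrightarrow> norm (mb a z) < 1"
  by (rule Moebius_function_norm_lt_1)

lemma mb_identity:
  assumes "norm a < 1" "norm z < 1"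
  shows "1 - norm (mb a z) ^ 2 = ((1 - norm a ^ 2) / (norm (1 - cnj a * z) ^ 2)) * (1 - norm z ^ 2)"
proof -
  have VV: "1 - a * cnj z \<noteq> 0"
    using mb_denom[OF assms] by (metis complex_cnj_cnj complex_cnj_mult complex_cnj_one right_minus_eq)
  then show ?thesis
    apply (cases a)
    apply (cases z)
    apply (simp add: Moebius_function_def divide_simps norm_divide norm_mult)
    apply (simp add: complex_norm complex_diff complex_mult one_complex.code complex_cnj)
    apply (auto simp: algebra_simps power2_eq_square)
    done
qed

lemma mb_exp_bound:
  assumes "norm a < 1" "norm w < 1"
  shows "norm (mb a w) \<le> exp (- ((1 - norm a) * (1 - norm w) / 8))"
proof -
  define x where "x = (1 - norm a) * (1 - norm w) / 4"
  have d: "norm (1 - cnj a * w) \<le> 2"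
  proof -
    have "norm (1 - cnj a * w) \<le> 1 + norm (cnj a * w)" using norm_triangle_ineq4[of 1 "cnj a * w"] by simp
    also have "norm (cnj a * w) \<le> 1" using assms by (simp add: norm_mult mult_le_one)
    finally show ?thesis by simp
  qed
  have dpos: "norm (1 - cnj a * w) > 0" using mb_denom[OF assms] by simp
  have "(1 - norm a ^ 2) \<ge> 1 - norm a" using assms by (simp add: power2_eq_square mult_left_le_one_le)
  moreover have "(1 - norm w ^ 2) \<ge> 1 - norm w" using assms by (simp add: power2_eq_square mult_left_le_one_le)
  moreover have "norm (1 - cnj a * w) ^ 2 \<le> 4" using d dpos
    by (metis power_mono norm_ge_zero numeral_Bit0 power2_eq_square mult_2_right numeral_times_numeral numeral_One mult_2 num_double power2_eq_square)
  ultimately have "((1 - norm a ^ 2) / (norm (1 - cnj a * w) ^ 2)) * (1 - norm w ^ 2) \<ge> x"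
  proof -
    assume h1: "(1 - norm a ^ 2) \<ge> 1 - norm a" and h2: "(1 - norm w ^ 2) \<ge> 1 - norm w"
       and h3: "norm (1 - cnj a * w) ^ 2 \<le> 4"
    have p1: "1 - norm a > 0" "1 - norm w > 0" using assms by auto
    have "x = ((1 - norm a) / 4) * (1 - norm w)" by (simp add: x_def)
    also have "\<dots> \<le> ((1 - norm a ^ 2) / (norm (1 - cnj a * w) ^ 2)) * (1 - norm w ^ 2)"
    proof (rule mult_mono)
      show "(1 - norm a) / 4 \<le> (1 - norm a ^ 2) / (norm (1 - cnj a * w) ^ 2)"
        using h1 h3 p1 dpos by (intro frac_le) auto
    qed (use h1 h2 p1 dpos in auto)
    finally show ?thesis .
  qed
  then have "norm (mb a w) ^ 2 \<le> 1 - x" using mb_identity[OF assms] by linarith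
  also have "\<dots> \<le> exp (- x)" using exp_ge_add_one_self[of "-x"] by simp
  also have "\<dots> = exp (- x / 2) ^ 2" by (simp add: exp_double[symmetric] power2_eq_square exp_add[symmetric])
  finally have "norm (mb a w) \<le> exp (- x / 2)" by (rule power2_le_imp_le) simp
  then show ?thesis by (simp add: x_def)
qed


lemma factor:
  assumes holg: "g holomorphic_on ball 0 1" and bd: "\<And>z. z \<in> ball 0 1 \<Longrightarrow> norm (g z) \<le> M"
    and a: "a \<in> ball 0 1" and ga: "g a = 0"
  shows "\<exists>h. h holomorphic_on ball 0 1 \<and> (\<forall>z\<in>ball 0 1. norm (h z) \<le> M) \<and>
             (\<forall>z\<in>ball 0 1. g z = mb a z * h z)"
proof -
  have na: "norm a < 1" using a by simp
  have M0: "0 \<le> M" using bd[of 0] by (meson norm_ge_zero order_trans centre_in_ball zero_less_one)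
  define G where "G = (\<lambda>z. if z = a then deriv g a else (g z - g a) / (z - a))"
  have holG: "G holomorphic_on ball 0 1" unfolding G_def
    by (rule pole_lemma[OF holg]) (use a in auto)
  define h where "h = (\<lambda>z. G z * (1 - cnj a * z))"
  have holh: "h holomorphic_on ball 0 1" unfolding h_def by (intro holomorphic_intros holG)
  have eq: "g z = mb a z * h z" if z: "z \<in> ball 0 1" for z
  proof (cases "z = a")
    case True then show ?thesis using ga by (simp add: Moebius_function_eq_zero)
  next
    case False
    have "1 - cnj a * z \<noteq> 0" using mb_denom[OF na] z by simp
    then show ?thesis using False ga by (simp add: Moebius_function_simple h_def G_def)
  qed
  have gle: "norm (g z) \<le> M * norm (mb a z)" if z: "z \<in> ball 0 1" for z
  proof (rule field_le_epsilon)
    fix e :: real assume e: "0 < e"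
    define c :: complex where "c = of_real (M + e)"
    have nc: "norm c = M + e" using M0 e unfolding c_def norm_of_real by simp
    have c0: "c \<noteq> 0" using nc M0 e by auto
    define F where "F = (\<lambda>u. g (mb (-a) u) / c)"
    have hm: "mb (-a) holomorphic_on ball 0 1" by (rule Moebius_function_holomorphic) (use na in simp)
    have im: "mb (-a) ` ball 0 1 \<subseteq> ball 0 1" using Moebius_function_norm_lt_1[of "-a"] na by auto
    have "(g \<circ> mb (-a)) holomorphic_on ball 0 1" by (rule holomorphic_on_compose_gen[OF hm holg im])
    then have holF: "F holomorphic_on ball 0 1" unfolding F_def o_def
      by (intro holomorphic_intros) (use c0 in auto)
    have F0: "F 0 = 0" by (simp add: F_def Moebius_function_of_zero ga)
    have Flt: "norm (F u) < 1" if "norm u < 1" for u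
    proof -
      have "mb (-a) u \<in> ball 0 1" using Moebius_function_norm_lt_1[of "-a" u 0] na that by simp
      then have "norm (g (mb (-a) u)) \<le> M" by (rule bd)
      then show ?thesis using M0 e by (simp add: F_def norm_divide divide_less_eq nc)
    qed
    have nz: "norm (mb a z) < 1" using mb_lt1 na z by simp
    have "norm (F (mb a z)) \<le> norm (mb a z)"
      by (rule Schwarz_Lemma(1)[OF holF F0 Flt nz])
    moreover have "F (mb a z) = g z / c"
      using Moebius_function_compose[of "-a" a z] na z by (simp add: F_def)
    ultimately have "norm (g z) \<le> (M + e) * norm (mb a z)"
      using M0 e by (simp add: norm_divide divide_le_eq mult.commute nc)
    also have "\<dots> \<le> M * norm (mb a z) + e" using nz e by (simp add: algebra_simps)
    finally show "norm (g z) \<le> M * norm (mb a z) + e" .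
  qed
  have hle': "norm (h z) \<le> M" if z: "z \<in> ball 0 1" "z \<noteq> a" for z
  proof -
    have pos: "norm (mb a z) > 0" using mb_zero_iff[OF na, of z] z by simp
    have "norm (mb a z) * norm (h z) \<le> M * norm (mb a z)" using gle[OF z(1)] eq[OF z(1)] by (simp add: norm_mult)
    then show ?thesis using pos by (simp add: mult.commute)
  qed
  have hle: "norm (h z) \<le> M" if z: "z \<in> ball 0 1" for z
  proof (cases "z = a")
    case False then show ?thesis using hle' z by blast
  next
    case True
    have "isCont h a" using holh a by (meson holomorphic_on_imp_continuous_on continuous_on_eq_continuous_at open_ball)
    then have lim: "(h \<longlongrightarrow> h a) (at a)" by (simp add: isCont_def)
    have ev: "eventually (\<lambda>x. norm (h x) \<le> M) (at a)"
    proof -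
      have "eventually (\<lambda>x. x \<in> ball 0 1) (at a)" using eventually_at_in_open[OF open_ball a] by (rule eventually_mono) auto
      moreover have "eventually (\<lambda>x. x \<noteq> a) (at a)" by (simp add: eventually_at_filter)
      ultimately show ?thesis by eventually_elim (use hle' in auto)
    qed
    have "norm (h a) \<le> M"
      by (rule tendsto_le[OF at_neq_bot tendsto_const tendsto_norm[OF lim] ev])
    then show ?thesis using True by simp
  qed
  show ?thesis using holh hle eq by blast
qed


lemma prod_bound:
  fixes z :: "nat \<Rightarrow> complex"
  assumes inz: "\<And>j. z j \<in> ball 0 1" and inj: "inj z" and fin: "finite S"
  shows "g holomorphic_on ball 0 1 \<Longrightarrow> (\<And>u. u \<in> ball 0 1 \<Longrightarrow> norm (g u) \<le> M) \<Longrightarrow>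
         (\<And>k. k \<in> S \<Longrightarrow> g (z k) = 0) \<Longrightarrow> w \<in> ball 0 1 \<Longrightarrow>
         norm (g w) \<le> M * (\<Prod>k\<in>S. norm (mb (z k) w))"
  using fin
proof (induction S arbitrary: g M rule: finite_induct)
  case empty
  then show ?case by simp
next
  case (insert k S)
  obtain h where holh: "h holomorphic_on ball 0 1" and hb: "\<forall>u\<in>ball 0 1. norm (h u) \<le> M"
    and eq: "\<forall>u\<in>ball 0 1. g u = mb (z k) u * h u"
    using factor[OF insert.prems(1) insert.prems(2) inz[of k] insert.prems(3)] by blast
  have hz: "h (z i) = 0" if i: "i \<in> S" for i
  proof -
    have "i \<noteq> k" using i insert.hyps(2) by auto
    then have "z i \<noteq> z k" using inj by (auto dest: injD)
    then have "mb (z k) (z i) \<noteq> 0" using mb_zero_iff[of "z k" "z i"] inz by simp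
    moreover have "g (z i) = 0" using insert.prems(3) i by simp
    ultimately show ?thesis using eq inz[of i] by simp
  qed
  have "norm (h w) \<le> M * (\<Prod>k\<in>S. norm (mb (z k) w))"
    by (rule insert.IH[OF holh]) (use hb hz insert.prems(4) in auto)
  then have "norm (mb (z k) w) * norm (h w) \<le> norm (mb (z k) w) * (M * (\<Prod>k\<in>S. norm (mb (z k) w)))"
    by (rule mult_left_mono) simp
  then show ?case using eq insert.prems(4) insert.hyps by (simp add: norm_mult mult_ac)
qed

lemma interp_bound:
  fixes z :: "nat \<Rightarrow> complex"
  assumes inz: "\<And>j. z j \<in> ball 0 1" and inj: "inj z" and fin: "finite S"
    and holf: "f holomorphic_on ball 0 1" and fb: "\<And>u. u \<in> ball 0 1 \<Longrightarrow> norm (f u) \<le> M"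
    and w: "w \<in> ball 0 1"
  defines "P \<equiv> (\<lambda>j. \<Prod>k\<in>S-{j}. norm (mb (z k) (z j)))"
  defines "E \<equiv> (\<Sum>j\<in>S. norm (f (z j)) / P j)"
  shows "norm (f w) \<le> (M + E) * (\<Prod>k\<in>S. norm (mb (z k) w)) + E"
proof -
  have nz: "norm (z j) < 1" for j using inz[of j] by simp
  have mbnz: "mb (z k) (z j) \<noteq> 0" if "k \<noteq> j" for k j
    using mb_zero_iff[OF nz nz, of k j] inj that by (auto dest: injD)
  have Ppos: "P j > 0" for j unfolding P_def
    by (rule prod_pos) (use mbnz in auto)
  define Q where "Q = (\<lambda>j. \<Prod>k\<in>S-{j}. mb (z k) (z j))"
  have nQ: "norm (Q j) = P j" for j by (simp add: Q_def P_def prod_norm)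
  have Q0: "Q j \<noteq> 0" for j using nQ[of j] Ppos[of j] by auto
  define L where "L = (\<lambda>j u. (\<Prod>k\<in>S-{j}. mb (z k) u) / Q j)"
  have holL: "L j holomorphic_on ball 0 1" for j unfolding L_def
    by (intro holomorphic_intros Moebius_function_holomorphic) (use nz Q0 in auto)
  have Lb: "norm (L j u) \<le> 1 / P j" if u: "u \<in> ball 0 1" for j u
  proof -
    have "norm (\<Prod>k\<in>S-{j}. mb (z k) u) \<le> 1"
      unfolding prod_norm[symmetric]
      by (rule prod_le_1) (use mb_lt1 nz u in \<open>auto intro: less_imp_le\<close>)
    then show ?thesis using Ppos[of j] by (simp add: L_def norm_divide nQ divide_right_mono)
  qed
  have Ljj: "L j (z j) = 1" for j using Q0 by (simp add: L_def Q_def)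
  have Lij: "L j (z i) = 0" if "i \<in> S" "i \<noteq> j" for i j
  proof -
    have "(\<Prod>k\<in>S-{j}. mb (z k) (z i)) = 0"
      using that fin by (intro prod_zero) (auto intro!: bexI[of _ i] simp: Moebius_function_eq_zero)
    then show ?thesis by (simp add: L_def)
  qed
  define g where "g = (\<lambda>u. f u - (\<Sum>j\<in>S. f (z j) * L j u))"
  have holg: "g holomorphic_on ball 0 1" unfolding g_def
    by (intro holomorphic_intros holf holL)
  have sumb: "norm (\<Sum>j\<in>S. f (z j) * L j u) \<le> E" if u: "u \<in> ball 0 1" for u
  proof -
    have "norm (\<Sum>j\<in>S. f (z j) * L j u) \<le> (\<Sum>j\<in>S. norm (f (z j) * L j u))" by (rule norm_sum)
    also have "\<dots> \<le> (\<Sum>j\<in>S. norm (f (z j)) / P j)"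
    proof (rule sum_mono)
      fix j assume "j \<in> S"
      have "norm (f (z j)) * norm (L j u) \<le> norm (f (z j)) * (1 / P j)"
        by (rule mult_left_mono[OF Lb[OF u]]) simp
      then show "norm (f (z j) * L j u) \<le> norm (f (z j)) / P j" by (simp add: norm_mult)
    qed
    finally show ?thesis by (simp add: E_def)
  qed
  have gb: "norm (g u) \<le> M + E" if u: "u \<in> ball 0 1" for u
  proof -
    have "norm (g u) \<le> norm (f u) + norm (\<Sum>j\<in>S. f (z j) * L j u)"
      unfolding g_def by (rule norm_triangle_ineq4)
    then show ?thesis using fb[OF u] sumb[OF u] by linarith
  qed
  have gz: "g (z i) = 0" if i: "i \<in> S" for i
  proof -
    have "(\<Sum>j\<in>S. f (z j) * L j (z i)) = f (z i) * L i (z i) + (\<Sum>j\<in>S-{i}. f (z j) * L j (z i))"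
      using fin i by (simp add: sum.remove)
    also have "(\<Sum>j\<in>S-{i}. f (z j) * L j (z i)) = 0"
      by (rule sum.neutral) (use Lij i in auto)
    finally show ?thesis by (simp add: g_def Ljj)
  qed
  have "norm (g w) \<le> (M + E) * (\<Prod>k\<in>S. norm (mb (z k) w))"
    by (rule prod_bound[OF inz inj fin holg gb gz w])
  moreover have "norm (f w) \<le> norm (g w) + norm (\<Sum>j\<in>S. f (z j) * L j w)"
    unfolding g_def using norm_triangle_ineq[of "f w - (\<Sum>j\<in>S. f (z j) * L j w)" "(\<Sum>j\<in>S. f (z j) * L j w)"] by simp
  ultimately show ?thesis using sumb[OF w] by linarith
qed


lemma explim:
  fixes c M C :: real assumes "c > 0"
  shows "(\<lambda>n. M * exp (- c * real n) + C / real (Suc n)) \<longlonglongrightarrow> 0"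
  using assms by real_asymp

theorem theorem1p4:
  fixes z :: "nat \<Rightarrow> complex"
  assumes in_disc: "\<And>j. z j \<in> ball 0 1"
    and distinct: "inj z"
    and diverge: "\<not> summable (\<lambda>j. 1 - norm (z j))"
  shows "\<exists>\<eta> :: nat \<Rightarrow> real. (\<forall>j. \<eta> j > 0) \<and> \<eta> \<longlonglongrightarrow> 0 \<and>
    (\<forall>f :: complex \<Rightarrow> complex.
       f holomorphic_on ball 0 1 \<and> bounded (f ` ball 0 1) \<and> (\<exists>w\<in>ball 0 1. f w \<noteq> 0) \<longrightarrow>
       limsup (\<lambda>j. ereal (norm (f (z j)) / \<eta> j)) = \<infinity>)"
proof -
  have nz: "norm (z j) < 1" for j using in_disc[of j] by simp
  define d where "d j = 1 - norm (z j)" for j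
  have d0: "d j \<ge> 0" for j using nz[of j] by (simp add: d_def)
  have ex: "\<exists>b>a. real n \<le> (\<Sum>j\<in>{a..<b}. d j)" for a n
  proof (rule ccontr)
    assume "\<not> ?thesis"
    then have lt: "\<And>b. b > a \<Longrightarrow> (\<Sum>j\<in>{a..<b}. d j) < real n" by force
    have "summable d"
    proof (rule bounded_imp_summable[OF d0])
      fix m
      define b where "b = max a (Suc m)"
      have "(\<Sum>k\<le>m. d k) = (\<Sum>k\<in>{0..<Suc m}. d k)" by (simp add: atLeast0LessThan lessThan_Suc_atMost)
      also have "\<dots> \<le> (\<Sum>k\<in>{0..<b}. d k)" by (rule sum_mono2) (use d0 in \<open>auto simp: b_def\<close>)
      also have "\<dots> = (\<Sum>k\<in>{0..<a}. d k) + (\<Sum>k\<in>{a..<b}. d k)"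
        by (rule sum.atLeastLessThan_concat[symmetric]) (auto simp: b_def)
      also have "(\<Sum>k\<in>{a..<b}. d k) \<le> real n"
      proof (cases "b > a")
        case True then show ?thesis using lt[of b] by simp
      next
        case False then show ?thesis by simp
      qed
      finally show "(\<Sum>k\<le>m. d k) \<le> (\<Sum>k\<in>{0..<a}. d k) + real n" by simp
    qed
    moreover have "d = (\<lambda>j. 1 - norm (z j))" by (simp add: d_def fun_eq_iff)
    ultimately show False using diverge by simp
  qed
  define A where "A = rec_nat 0 (\<lambda>n an. SOME b. an < b \<and> real n \<le> (\<Sum>j\<in>{an..<b}. d j))"
  have A0: "A 0 = 0" by (simp add: A_def)
  have AS: "A (Suc n) = (SOME b. A n < b \<and> real n \<le> (\<Sum>j\<in>{A n..<b}. d j))" for n by (simp add: A_def)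
  have Aprop: "A n < A (Suc n) \<and> real n \<le> (\<Sum>j\<in>{A n..<A (Suc n)}. d j)" for n
    unfolding AS by (rule someI_ex) (rule ex)
  have smA: "strict_mono A" by (rule strict_monoI_Suc) (use Aprop in auto)
  have Age: "n \<le> A n" for n using smA by (rule seq_suble)
  define blk where "blk j = (LEAST n. j < A (Suc n))" for j
  have blk_in: "A (blk j) \<le> j \<and> j < A (Suc (blk j))" for j
  proof -
    have exj: "j < A (Suc j)" using Age[of "Suc j"] by simp
    have 1: "j < A (Suc (blk j))" unfolding blk_def by (rule LeastI[of _ j]) (rule exj)
    have 2: "A (blk j) \<le> j"
    proof (cases "blk j")
      case 0 then show ?thesis using A0 by simp
    next
      case (Suc m)
      then have "m < blk j" by simp
      then have "\<not> j < A (Suc m)" unfolding blk_def by (rule not_less_Least)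
      then show ?thesis using Suc by simp
    qed
    show ?thesis using 1 2 by simp
  qed
  have blk_eq: "blk j = n" if "A n \<le> j" "j < A (Suc n)" for n j
    unfolding blk_def
  proof (rule Least_equality)
    show "j < A (Suc n)" by fact
    fix m assume m: "j < A (Suc m)"
    show "n \<le> m"
    proof (rule ccontr)
      assume "\<not> n \<le> m"
      then have "Suc m \<le> n" by simp
      then have "A (Suc m) \<le> A n" using smA by (simp add: strict_mono_less_eq)
      then show False using m that by simp
    qed
  qed
  have blk_ge: "n \<le> blk j" if "A n \<le> j" for n j
  proof (rule ccontr)
    assume "\<not> n \<le> blk j"
    then have "Suc (blk j) \<le> n" by simp
    then have "A (Suc (blk j)) \<le> A n" using smA by (simp add: strict_mono_less_eq)
    then show False using blk_in[of j] that by simp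
  qed
  define B where "B n = {A n..<A (Suc n)}" for n
  have finB: "finite (B n)" for n by (simp add: B_def)
  have cardB: "card (B n) \<ge> 1" for n using Aprop[of n] by (auto simp: B_def)
  define P where "P j = (\<Prod>k\<in>B (blk j)-{j}. norm (mb (z k) (z j)))" for j
  define \<eta> where "\<eta> j = P j / (real (Suc (blk j)) * real (card (B (blk j))))" for j
  have mbnz: "mb (z k) (z j) \<noteq> 0" if "k \<noteq> j" for k j
    using mb_zero_iff[OF nz nz, of k j] distinct that by (auto dest: injD)
  have Ppos: "P j > 0" for j unfolding P_def
    by (rule prod_pos) (use mbnz in auto)
  have Ple1: "P j \<le> 1" for j unfolding P_def
    by (rule prod_le_1) (use mb_lt1 nz in \<open>auto intro: less_imp_le\<close>)
  have etapos: "\<eta> j > 0" for j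
    using Ppos[of j] cardB[of "blk j"] by (simp add: \<eta>_def)
  have etale: "\<eta> j \<le> 1 / real (Suc (blk j))" for j
  proof -
    have "\<eta> j = (P j / real (card (B (blk j)))) / real (Suc (blk j))" by (simp add: \<eta>_def)
    also have "P j / real (card (B (blk j))) \<le> 1"
      using Ple1[of j] cardB[of "blk j"] Ppos[of j] by (simp add: divide_le_eq)
    then have "(P j / real (card (B (blk j)))) / real (Suc (blk j)) \<le> 1 / real (Suc (blk j))"
      by (rule divide_right_mono) simp
    finally show ?thesis .
  qed
  have etalim: "\<eta> \<longlonglongrightarrow> 0"
  proof (rule LIMSEQ_I)
    fix r :: real assume r: "0 < r"
    obtain n where m: "n > 0" "inverse (real n) < r" using ex_inverse_of_nat_less[OF r] by blast
    have "inverse (real (Suc n)) \<le> inverse (real n)" by (rule le_imp_inverse_le) (use m in auto)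
    then have n: "inverse (real (Suc n)) < r" using m by linarith
    show "\<exists>no. \<forall>j\<ge>no. norm (\<eta> j - 0) < r"
    proof (intro exI allI impI)
      fix j assume "A n \<le> j"
      then have "n \<le> blk j" by (rule blk_ge)
      then have "1 / real (Suc (blk j)) \<le> 1 / real (Suc n)" by (simp add: frac_le)
      then show "norm (\<eta> j - 0) < r" using etale[of j] etapos[of j] n by (simp add: inverse_eq_divide)
    qed
  qed
  show ?thesis
  proof (intro exI conjI allI impI)
    show "\<And>j. \<eta> j > 0" by (rule etapos)
    show "\<eta> \<longlonglongrightarrow> 0" by (rule etalim)
    fix f :: "complex \<Rightarrow> complex"
    assume H: "f holomorphic_on ball 0 1 \<and> bounded (f ` ball 0 1) \<and> (\<exists>w\<in>ball 0 1. f w \<noteq> 0)"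
    then have holf: "f holomorphic_on ball 0 1" by blast
    obtain w where w: "w \<in> ball 0 1" and fw: "f w \<noteq> 0" using H by blast
    obtain M where M: "\<And>u. u \<in> ball 0 1 \<Longrightarrow> norm (f u) \<le> M"
      using H unfolding bounded_iff by blast
    have M0: "M \<ge> 0" using M[OF w] by (meson norm_ge_zero order_trans)
    show "limsup (\<lambda>j. ereal (norm (f (z j)) / \<eta> j)) = \<infinity>"
    proof (rule ccontr)
      assume "limsup (\<lambda>j. ereal (norm (f (z j)) / \<eta> j)) \<noteq> \<infinity>"
      then have "limsup (\<lambda>j. ereal (norm (f (z j)) / \<eta> j)) < \<infinity>" by (simp add: less_top[symmetric])
      then obtain C where C: "\<And>j. norm (f (z j)) / \<eta> j \<le> C"
        using limsup_finite_then_bounded[of "\<lambda>j. norm (f (z j)) / \<eta> j"] by blast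
      have fzle: "norm (f (z j)) \<le> C * \<eta> j" for j using C[of j] etapos[of j] by (simp add: divide_le_eq)
      have C0: "C \<ge> 0" using fzle[of 0] etapos[of 0] by (meson norm_ge_zero order_trans zero_le_mult_iff not_le)
      define c where "c = (1 - norm w) / 8"
      have cpos: "c > 0" using w by (simp add: c_def)
      have key: "norm (f w) \<le> (M + C) * exp (- c * real n) + C / real (Suc n)" for n
      proof -
        have blkS: "blk j = n" if "j \<in> B n" for j using that blk_eq by (simp add: B_def)
        define E where "E = (\<Sum>j\<in>B n. norm (f (z j)) / (\<Prod>k\<in>B n-{j}. norm (mb (z k) (z j))))"
        have main: "norm (f w) \<le> (M + E) * (\<Prod>k\<in>B n. norm (mb (z k) w)) + E"
          unfolding E_def by (rule interp_bound[OF in_disc distinct finB holf M w])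
        have "E = (\<Sum>j\<in>B n. norm (f (z j)) / P j)"
          unfolding E_def by (rule sum.cong) (simp_all add: P_def blkS)
        also have "\<dots> \<le> (\<Sum>j\<in>B n. C * \<eta> j / P j)"
          by (rule sum_mono, rule divide_right_mono[OF fzle]) (use Ppos in \<open>auto intro: less_imp_le\<close>)
        also have "\<dots> = (\<Sum>j\<in>B n. C / (real (Suc n) * real (card (B n))))"
        proof (rule sum.cong)
          fix j assume j: "j \<in> B n"
          have "P j \<noteq> 0" using Ppos[of j] by simp
          then show "C * \<eta> j / P j = C / (real (Suc n) * real (card (B n)))"
            using blkS[OF j] by (simp add: \<eta>_def)
        qed simp
        also have "\<dots> = C / real (Suc n)" using cardB[of n] by simp
        finally have Ele: "E \<le> C / real (Suc n)" .
        have E0: "E \<ge> 0" unfolding E_def by (rule sum_nonneg) (simp add: prod_nonneg)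
        have "(\<Prod>k\<in>B n. norm (mb (z k) w)) \<le> (\<Prod>k\<in>B n. exp (- (d k * (1 - norm w) / 8)))"
          by (rule prod_mono) (use mb_exp_bound nz w in \<open>auto simp: d_def\<close>)
        also have "\<dots> = exp (\<Sum>k\<in>B n. - (d k * (1 - norm w) / 8))" by (rule exp_sum[OF finB, symmetric])
        also have "(\<Sum>k\<in>B n. - (d k * (1 - norm w) / 8)) = - c * (\<Sum>k\<in>B n. d k)"
        proof -
          have "(\<Sum>k\<in>B n. - (d k * (1 - norm w) / 8)) = (\<Sum>k\<in>B n. (- c) * d k)"
            by (rule sum.cong) (simp_all add: c_def)
          also have "\<dots> = - c * (\<Sum>k\<in>B n. d k)" by (rule sum_distrib_left[symmetric])
          finally show ?thesis .
        qed
        also have "\<dots> \<le> - c * real n" using Aprop[of n] cpos by (simp add: B_def)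
        finally have Pr: "(\<Prod>k\<in>B n. norm (mb (z k) w)) \<le> exp (- c * real n)" by simp
        have Pr0: "(\<Prod>k\<in>B n. norm (mb (z k) w)) \<ge> 0" by (simp add: prod_nonneg)
        have "C * 1 \<le> C * real (Suc n)" using C0 by (intro mult_left_mono) auto
        then have "C / real (Suc n) \<le> C" by (simp add: divide_le_eq)
        then have "(M + E) * (\<Prod>k\<in>B n. norm (mb (z k) w)) \<le> (M + C) * exp (- c * real n)"
          using Ele E0 M0 Pr Pr0 by (intro mult_mono) auto
        then show ?thesis using main Ele by linarith
      qed
      have "norm (f w) \<le> 0"
        by (rule tendsto_le[OF sequentially_bot explim[of c "M + C" C, OF cpos] tendsto_const]) (use key in auto)
      then show False using fw by simp
    qed
  qed
qed

end
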